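(* Let $A=KQ/I$ be a finite-dimensional gentle algebra and let $C=c_1\cdots c_m$ be a string for $A$ with an intersecting auto-reaching given by substrings $C[i,j]$ and $C[i',j']$ with $i<i'\le j<j'$. Then $C[i,i']$ is cyclically equivalent to $C[j,j']$, and $C[i,j]$ is a substring of $(C[i,i'])^\infty$, i.e. the word $c_i\cdots c_{j-1}$ is a consecutive subword of the infinite periodic word obtained by repeating $c_i\cdots c_{i'-1}$.
   Context: Letters are arrows $\alpha\in Q_1$ (direct, traversed from $s(\alpha)$ to $t(\alpha)$) and formal inverses $\alpha^{-1}$ (inverse, traversed from $t(\alpha)$ to $s(\alpha)$). A string is a reduced walk in $Q$ avoiding the relations of $I$ and their inverses; it is identified with its inverse walk. For $C=c_1\cdots c_m$ with vertex positions $v_1,\dots,v_{m+1}$ and $1\le i\le j\le m+1$, $C[i,j]=c_i\cdots c_{j-1}$ (trivial if $i=j$). $C[i,j]$ is on top of $C$ if ($i=1$ or $c_{i-1}$ is inverse) and ($j=m+1$ or $c_j$ is direct); at the bottom if ($i=1$ or $c_{i-1}$ is direct) and ($j=m+1$ or $c_j$ is inverse). An auto-reaching of $C$ is given by a substring on top and a substring at the bottom of $C$ which are equal as strings (equal or mutually inverse walks) and satisfy the swinging arms condition: writing the top one as $C[i_0,j_0]$ and the bottom one as $C[i_0',j_0']$, if $i_0'=1$ then $i_0\ne1$, and if $j_0'=m+1$ then $j_0\ne m+1$. It is intersecting if the two substrings $C[i,j]$, $C[i',j']$ satisfy $i<i'\le j<j'$ or $i'<i\le j'<j$. Two words $\alpha_1\cdots\alpha_k$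 and $\beta_1\cdots\beta_k$ are cyclically equivalent if $\beta_1\cdots\beta_k=\alpha_{r+1}\cdots\alpha_k\alpha_1\cdots\alpha_r$ for some $0\le r<k$. *)

theory Defs
  imports Main
begin

text \<open>A bound quiver (Q,I) with Q = (Q0, Q1, s, t) and I generated by a set R of
  paths of length two; a pair (a,b) in R stands for the path "a then b"
  (so t a = s b).\<close>

datatype 'a letter = Dir 'a | Inv 'a

fun arr :: "'a letter \<Rightarrow> 'a" where
  "arr (Dir a) = a" | "arr (Inv a) = a"

fun is_dir :: "'a letter \<Rightarrow> bool" where
  "is_dir (Dir a) = True" | "is_dir (Inv a) = False"

fun is_inv :: "'a letter \<Rightarrow> bool" where
  "is_inv (Dir a) = False" | "is_inv (Inv a) = True"

fun linv :: "'a letter \<Rightarrow> 'a letter" where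
  "linv (Dir a) = Inv a" | "linv (Inv a) = Dir a"

fun lsrc :: "('a \<Rightarrow> 'v) \<Rightarrow> ('a \<Rightarrow> 'v) \<Rightarrow> 'a letter \<Rightarrow> 'v" where
  "lsrc s t (Dir a) = s a" | "lsrc s t (Inv a) = t a"

fun ltgt :: "('a \<Rightarrow> 'v) \<Rightarrow> ('a \<Rightarrow> 'v) \<Rightarrow> 'a letter \<Rightarrow> 'v" where
  "ltgt s t (Dir a) = t a" | "ltgt s t (Inv a) = s a"

definition rel_free_path ::
  "'a set \<Rightarrow> ('a \<Rightarrow> 'v) \<Rightarrow> ('a \<Rightarrow> 'v) \<Rightarrow> ('a \<times> 'a) set \<Rightarrow> 'a list \<Rightarrow> bool" where
  "rel_free_path Q1 s t R p \<longleftrightarrow>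
     set p \<subseteq> Q1 \<and>
     (\<forall>k. Suc k < length p \<longrightarrow> t (p ! k) = s (p ! Suc k) \<and> (p ! k, p ! Suc k) \<notin> R)"

text \<open>Finite-dimensionality of
  KQ/I (with Q finite, I generated by paths of length 2) means that there are only
  finitely many paths not in I, i.e. the lengths of relation-free paths are bounded.\<close>
definition gentle ::
  "'v set \<Rightarrow> 'a set \<Rightarrow> ('a \<Rightarrow> 'v) \<Rightarrow> ('a \<Rightarrow> 'v) \<Rightarrow> ('a \<times> 'a) set \<Rightarrow> bool" where
  "gentle Q0 Q1 s t R \<longleftrightarrow>
     finite Q0 \<and> finite Q1 \<and>
     (\<forall>a\<in>Q1. s a \<in> Q0 \<and> t a \<in> Q0) \<and>
     R \<subseteq> {(a, b). a \<in> Q1 \<and> b \<in> Q1 \<and> t a = s b} \<and>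
     (\<forall>v\<in>Q0. card {a\<in>Q1. s a = v} \<le> 2 \<and> card {a\<in>Q1. t a = v} \<le> 2) \<and>
     (\<forall>b\<in>Q1. card {a\<in>Q1. t a = s b \<and> (a, b) \<in> R} \<le> 1 \<and>
              card {a\<in>Q1. t a = s b \<and> (a, b) \<notin> R} \<le> 1) \<and>
     (\<forall>a\<in>Q1. card {b\<in>Q1. t a = s b \<and> (a, b) \<in> R} \<le> 1 \<and>
              card {b\<in>Q1. t a = s b \<and> (a, b) \<notin> R} \<le> 1) \<and>
     (\<exists>N. \<forall>p. rel_free_path Q1 s t R p \<longrightarrow> length p \<le> N)"

text \<open>A string: a walk starting at vertex v with letters C, reduced and avoiding
  the relations and their inverses.  (Trivial strings: C = [] at vertex v.)\<close>
definition is_string ::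
  "'v set \<Rightarrow> 'a set \<Rightarrow> ('a \<Rightarrow> 'v) \<Rightarrow> ('a \<Rightarrow> 'v) \<Rightarrow> ('a \<times> 'a) set \<Rightarrow> 'v \<Rightarrow> 'a letter list \<Rightarrow> bool" where
  "is_string Q0 Q1 s t R v C \<longleftrightarrow>
     v \<in> Q0 \<and> arr ` set C \<subseteq> Q1 \<and>
     (C \<noteq> [] \<longrightarrow> lsrc s t (C ! 0) = v) \<and>
     (\<forall>k. Suc k < length C \<longrightarrow>
        ltgt s t (C ! k) = lsrc s t (C ! Suc k) \<and>
        C ! Suc k \<noteq> linv (C ! k) \<and>
        \<not> (\<exists>a b. C ! k = Dir a \<and> C ! Suc k = Dir b \<and> (a, b) \<in> R) \<and>
        \<not> (\<exists>a b. C ! k = Inv b \<and> C ! Suc k = Inv a \<and> (a, b) \<in> R))"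

text \<open>Vertex positions v_1, ..., v_(m+1) (1-indexed).\<close>
definition vpos :: "('a \<Rightarrow> 'v) \<Rightarrow> ('a \<Rightarrow> 'v) \<Rightarrow> 'v \<Rightarrow> 'a letter list \<Rightarrow> nat \<Rightarrow> 'v" where
  "vpos s t v C k = (if k \<le> 1 then v else ltgt s t (C ! (k - 2)))"

text \<open>The word c_i ... c_(j-1) (1-indexed).\<close>
definition subword :: "'a letter list \<Rightarrow> nat \<Rightarrow> nat \<Rightarrow> 'a letter list" where
  "subword C i j = take (j - i) (drop (i - 1) C)"

definition substr :: "('a \<Rightarrow> 'v) \<Rightarrow> ('a \<Rightarrow> 'v) \<Rightarrow> 'v \<Rightarrow> 'a letter list \<Rightarrow> nat \<Rightarrow> nat
    \<Rightarrow> 'v \<times> 'a letter list" where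
  "substr s t v C i j = (vpos s t v C i, subword C i j)"

definition walk_end :: "('a \<Rightarrow> 'v) \<Rightarrow> ('a \<Rightarrow> 'v) \<Rightarrow> 'v \<times> 'a letter list \<Rightarrow> 'v" where
  "walk_end s t w = (if snd w = [] then fst w else ltgt s t (last (snd w)))"

definition walk_inv :: "('a \<Rightarrow> 'v) \<Rightarrow> ('a \<Rightarrow> 'v) \<Rightarrow> 'v \<times> 'a letter list \<Rightarrow> 'v \<times> 'a letter list" where
  "walk_inv s t w = (walk_end s t w, rev (map linv (snd w)))"

definition eq_as_strings :: "('a \<Rightarrow> 'v) \<Rightarrow> ('a \<Rightarrow> 'v) \<Rightarrow> 'v \<times> 'a letter list
    \<Rightarrow> 'v \<times> 'a letter list \<Rightarrow> bool" where
  "eq_as_strings s t w w' \<longleftrightarrow> w = w' \<or> w = walk_inv s t w'"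

definition valid_pos :: "'a letter list \<Rightarrow> nat \<Rightarrow> nat \<Rightarrow> bool" where
  "valid_pos C i j \<longleftrightarrow> 1 \<le> i \<and> i \<le> j \<and> j \<le> length C + 1"

definition on_top :: "'a letter list \<Rightarrow> nat \<Rightarrow> nat \<Rightarrow> bool" where
  "on_top C i j \<longleftrightarrow> valid_pos C i j \<and>
     (i = 1 \<or> is_inv (C ! (i - 2))) \<and> (j = length C + 1 \<or> is_dir (C ! (j - 1)))"

definition at_bottom :: "'a letter list \<Rightarrow> nat \<Rightarrow> nat \<Rightarrow> bool" where
  "at_bottom C i j \<longleftrightarrow> valid_pos C i j \<and>
     (i = 1 \<or> is_dir (C ! (i - 2))) \<and> (j = length C + 1 \<or> is_inv (C ! (j - 1)))"

definition auto_reaching :: "('a \<Rightarrow> 'v) \<Rightarrow> ('a \<Rightarrow> 'v) \<Rightarrow> 'v \<Rightarrow> 'a letter list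
    \<Rightarrow> nat \<Rightarrow> nat \<Rightarrow> nat \<Rightarrow> nat \<Rightarrow> bool" where
  "auto_reaching s t v C i0 j0 i0' j0' \<longleftrightarrow>
     on_top C i0 j0 \<and> at_bottom C i0' j0' \<and>
     eq_as_strings s t (substr s t v C i0 j0) (substr s t v C i0' j0') \<and>
     (i0' = 1 \<longrightarrow> i0 \<noteq> 1) \<and> (j0' = length C + 1 \<longrightarrow> j0 \<noteq> length C + 1)"

definition cyc_equiv :: "'b list \<Rightarrow> 'b list \<Rightarrow> bool" where
  "cyc_equiv a b \<longleftrightarrow> length a = length b \<and>
     (\<exists>r. (r < length a \<or> (a = [] \<and> r = 0)) \<and> b = drop r a @ take r a)"

definition subword_of_power_inf :: "'b list \<Rightarrow> 'b list \<Rightarrow> bool" where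
  "subword_of_power_inf w p \<longleftrightarrow> p \<noteq> [] \<and>
     (\<exists>off. \<forall>n < length w. w ! n = p ! ((off + n) mod length p))"

end

theory Submission
  imports Defs
begin

lemma sub_len: "1 \<le> i \<Longrightarrow> i \<le> j \<Longrightarrow> j \<le> length C + 1 \<Longrightarrow> length (subword C i j) = j - i"
  unfolding subword_def by auto

lemma sub_nth: "1 \<le> i \<Longrightarrow> i \<le> j \<Longrightarrow> j \<le> length C + 1 \<Longrightarrow> k < j - i \<Longrightarrow>
   subword C i j ! k = C ! (i - 1 + k)"
  unfolding subword_def by auto

lemma linv_linv[simp]: "linv (linv x) = x" by (cases x) auto
lemma linv_neq[simp]: "linv x \<noteq> x" by (cases x) auto

lemma periodic:
  assumes "\<forall>k. k + d < M \<longrightarrow> C ! (b + k) = C ! (b + k + d)" "d > 0"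
  shows "k < M \<Longrightarrow> C ! (b + k) = C ! (b + k mod d)"
proof (induction k rule: less_induct)
  case (less k)
  show ?case
  proof (cases "k < d")
    case True then show ?thesis by simp
  next
    case False
    then have "C ! (b + (k - d)) = C ! (b + (k - d) + d)" using assms(1) less.prems
      by (metis False le_add_diff_inverse2 not_le)
    moreover have "C ! (b + (k - d)) = C ! (b + (k - d) mod d)" using less.IH[of "k - d"] less.prems False assms(2) by simp
    moreover have "(k - d) mod d = k mod d" using False by (simp add: le_mod_geq)
    ultimately show ?thesis using False by auto
  qed
qed

theorem mainTheorem8:
  fixes Q0 :: "'v set" and Q1 :: "'a set" and s t :: "'a \<Rightarrow> 'v"
    and R :: "('a \<times> 'a) set" and v :: 'v and C :: "'a letter list"
    and i j i' j' :: nat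
  assumes "gentle Q0 Q1 s t R"
    and "is_string Q0 Q1 s t R v C"
    and "auto_reaching s t v C i j i' j' \<or> auto_reaching s t v C i' j' i j"
    and "i < i'" and "i' \<le> j" and "j < j'"
  shows "cyc_equiv (subword C i i') (subword C j j') \<and>
         subword_of_power_inf (subword C i j) (subword C i i')"
proof -
  have vp: "1 \<le> i" "j' \<le> length C + 1"
    using assms(3) unfolding auto_reaching_def on_top_def at_bottom_def valid_pos_def by auto
  have eq: "subword C i j = subword C i' j' \<or> subword C i j = rev (map linv (subword C i' j'))
     \<or> subword C i' j' = rev (map linv (subword C i j))"
    using assms(3) unfolding auto_reaching_def eq_as_strings_def substr_def walk_inv_def by auto
  then have eq2: "subword C i j = subword C i' j' \<or> subword C i j = rev (map linv (subword C i' j'))"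
    by (metis linv_linv map_map comp_def map_idI rev_rev_ident rev_map)
  have lX: "length (subword C i j) = j - i" using vp assms by (intro sub_len) auto
  have lY: "length (subword C i' j') = j' - i'" using vp assms by (intro sub_len) auto
  have L: "j - i = j' - i'" using eq2 lX lY by (metis length_map length_rev)
  define d where "d = i' - i"
  define b where "b = i - 1"
  have dpos: "d > 0" using assms d_def by auto
  show ?thesis
  proof (cases "subword C i j = subword C i' j'")
    case True
    have P: "\<forall>k. k + d < j' - i \<longrightarrow> C ! (b + k) = C ! (b + k + d)"
    proof (intro allI impI)
      fix k assume k: "k + d < j' - i"
      then have "k < j - i" using L d_def assms by auto
      then have "subword C i j ! k = subword C i' j' ! k" using True by simp
      moreover have "subword C i j ! k = C ! (i - 1 + k)" using vp assms \<open>k < j - i\<close> by (intro sub_nth) auto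
      moreover have "subword C i' j' ! k = C ! (i' - 1 + k)" using vp assms \<open>k < j - i\<close> L by (intro sub_nth) auto
      moreover have "b + k = i - 1 + k" "b + k + d = i' - 1 + k" using b_def d_def vp assms by auto
      ultimately show "C ! (b + k) = C ! (b + k + d)" by metis
    qed
    have per: "\<And>k. k < j' - i \<Longrightarrow> C ! (b + k) = C ! (b + k mod d)"
      using periodic[OF P dpos] by blast
    have lA: "length (subword C i i') = d" using vp assms d_def by (subst sub_len) auto
    have lB: "length (subword C j j') = d" using vp assms d_def L by (subst sub_len) auto
    have cyc: "subword C j j' = rotate (j - i) (subword C i i')"
    proof (rule nth_equalityI)
      show "length (subword C j j') = length (rotate (j - i) (subword C i i'))" using lA lB by simp
    next
      fix m assume m: "m < length (subword C j j')"
      then have md: "m < d" using lB by simp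
      have "subword C j j' ! m = C ! (j - 1 + m)" using vp assms md L d_def by (intro sub_nth) auto
      also have "j - 1 + m = b + (j - i + m)" using b_def vp assms by auto
      also have "C ! (b + (j - i + m)) = C ! (b + (j - i + m) mod d)"
        using per[of "j - i + m"] md L d_def assms by auto
      also have "C ! (b + (j - i + m) mod d) = subword C i i' ! ((j - i + m) mod d)"
        using vp assms dpos d_def b_def by (subst sub_nth) auto
      also have "\<dots> = rotate (j - i) (subword C i i') ! m" using md lA by (simp add: nth_rotate)
      finally show "subword C j j' ! m = rotate (j - i) (subword C i i') ! m" .
    qed
    have c1: "cyc_equiv (subword C i i') (subword C j j')"
      unfolding cyc_equiv_def
      apply (rule conjI)
      using lA lB apply simp
      apply (rule exI[of _ "(j - i) mod d"])
      using cyc lA dpos by (simp add: rotate_drop_take)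
    have c2: "subword_of_power_inf (subword C i j) (subword C i i')"
      unfolding subword_of_power_inf_def
    proof (intro conjI exI[of _ 0] allI impI)
      show "subword C i i' \<noteq> []" using lA dpos by auto
    next
      fix n assume n: "n < length (subword C i j)"
      have "subword C i j ! n = C ! (b + n)" using vp assms n lX b_def by (subst sub_nth) auto
      also have "\<dots> = C ! (b + n mod d)" using per n lX assms by auto
      also have "\<dots> = subword C i i' ! (n mod d)"
        using vp assms dpos d_def b_def by (subst sub_nth) auto
      finally show "subword C i j ! n = subword C i i' ! ((0 + n) mod length (subword C i i'))"
        using lA by simp
    qed
    show ?thesis using c1 c2 by blast
  next
    case False
    then have inv: "subword C i j = rev (map linv (subword C i' j'))" using eq2 by blast
    define T where "T = i' + j - 3"
    have key: "\<And>x. i - 1 \<le> x \<Longrightarrow> x \<le> j - 2 \<Longrightarrow> C ! x = linv (C ! (T - x))"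
    proof -
      fix x assume x: "i - 1 \<le> x" "x \<le> j - 2"
      define k where "k = x - (i - 1)"
      have k: "k < j - i" using x k_def vp assms by auto
      have "subword C i j ! k = C ! x" using vp assms k k_def x by (subst sub_nth) auto
      moreover have "subword C i j ! k = linv (subword C i' j' ! (j - i - 1 - k))"
        using inv k lY L by (simp add: rev_nth)
      moreover have "subword C i' j' ! (j - i - 1 - k) = C ! (i' - 1 + (j - i - 1 - k))"
        using vp assms k L by (intro sub_nth) auto
      moreover have "i' - 1 + (j - i - 1 - k) = T - x" using T_def k_def k x vp assms by auto
      ultimately show "C ! x = linv (C ! (T - x))" by simp
    qed
    have str: "\<And>k. Suc k < length C \<Longrightarrow> C ! Suc k \<noteq> linv (C ! k)"
      using assms(2) unfolding is_string_def by blast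
    show ?thesis
    proof (cases "even T")
      case True
      define x where "x = T div 2"
      have "i - 1 \<le> x" "x \<le> j - 2" using x_def T_def True assms vp by auto
      then have "C ! x = linv (C ! x)" using key[of x] x_def True by (metis dvd_mult_div_cancel mult_2 diff_add_inverse2)
      then show ?thesis by (metis linv_neq)
    next
      case False
      define x where "x = T div 2"
      have T: "T = Suc (2 * x)" using False x_def by presburger
      have "i - 1 \<le> x" "x \<le> j - 2" using x_def T_def False assms vp by auto
      then have "C ! x = linv (C ! Suc x)" using key[of x] T by simp
      moreover have "Suc x < length C" using \<open>x \<le> j - 2\<close> assms vp by auto
      ultimately show ?thesis using str[of x] by simp
    qed
  qed
qed

end
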